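(* Let $(X_t)_{t\ge0}$ be a real process and $r\in\mathbb R$, and for $0<\varepsilon\le1$ set $X_1^\varepsilon:=X_{\varepsilon^2}$. Assume $S_t:=e^{-rt}\exp(X_t)$ is a martingale and that there exist $p>1$ and $t>0$ with $E[S_t^p]<\infty$. Then $\limsup_{\varepsilon\to0}E[\exp(pX_1^\varepsilon)]<\infty$. *)

theory Defs
  imports "HOL-Probability.Probability"
begin

definition filtration_on :: "'a measure \<Rightarrow> (real \<Rightarrow> 'a measure) \<Rightarrow> bool" where
  "filtration_on M F \<longleftrightarrow>
     (\<forall>t\<ge>0. sigma_finite_subalgebra M (F t)) \<and>
     (\<forall>s t. 0 \<le> s \<longrightarrow> s \<le> t \<longrightarrow> sets (F s) \<subseteq> sets (F t))"

definition martingale :: "'a measure \<Rightarrow> (real \<Rightarrow> 'a measure) \<Rightarrow> (real \<Rightarrow> 'a \<Rightarrow> real) \<Rightarrow> bool" where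
  "martingale M F S \<longleftrightarrow>
     filtration_on M F \<and>
     (\<forall>t\<ge>0. integrable M (S t) \<and> S t \<in> borel_measurable (F t)) \<and>
     (\<forall>s t. 0 \<le> s \<longrightarrow> s \<le> t \<longrightarrow> (AE \<omega> in M. real_cond_exp M (F s) (S t) \<omega> = S s \<omega>))"

end

theory Submission
  imports Defs
begin

theorem lemma4p1:
  fixes M :: "'a measure" and F :: "real \<Rightarrow> 'a measure"
    and X :: "real \<Rightarrow> 'a \<Rightarrow> real" and r p t :: real
  assumes "prob_space M"
    and "martingale M F (\<lambda>s \<omega>. exp (- r * s) * exp (X s \<omega>))"
    and "p > 1" and "t > 0"
    and "(\<integral>\<^sup>+ \<omega>. ennreal ((exp (- r * t) * exp (X t \<omega>)) powr p) \<partial>M) < \<infinity>"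
  shows "Limsup (at_right (0::real)) (\<lambda>\<epsilon>. \<integral>\<^sup>+ \<omega>. ennreal (exp (p * X (\<epsilon>\<^sup>2) \<omega>)) \<partial>M) < \<infinity>"
proof -
  define S where "S = (\<lambda>s \<omega>. exp (- r * s) * exp (X s \<omega>))"
  have mart: "martingale M F S" using assms(2) unfolding S_def .
  have filt: "filtration_on M F" using mart unfolding martingale_def by blast
  have sub: "sigma_finite_subalgebra M (F s)" if "s \<ge> 0" for s
    using filt that unfolding filtration_on_def by blast
  have intS: "integrable M (S s)" and measF: "S s \<in> borel_measurable (F s)" if "s \<ge> 0" for s
    using mart that unfolding martingale_def by blast+
  have measS: "S s \<in> borel_measurable M" if "s \<ge> 0" for s
    using measurable_from_subalg[OF sigma_finite_subalgebra.subalg[OF sub[OF that]] measF[OF that]] .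
  have ce: "AE \<omega> in M. real_cond_exp M (F s) (S t) \<omega> = S s \<omega>" if "0 \<le> s" "s \<le> t" for s
    using mart that unfolding martingale_def by blast
  define C where "C = (\<integral>\<omega>. S t \<omega> powr p \<partial>M)"
  have Spos: "S s \<omega> > 0" for s \<omega> unfolding S_def by simp
  have measP: "(\<lambda>\<omega>. S t \<omega> powr p) \<in> borel_measurable M"
    using measS[of t] assms(4) by (intro powr_real_measurable) auto
  have intP: "integrable M (\<lambda>\<omega>. S t \<omega> powr p)"
    by (rule integrableI_nonneg[OF measP]) (use assms(5) in \<open>auto simp: S_def\<close>)
  have bnd: "(\<integral>\<^sup>+ \<omega>. ennreal (S s \<omega> powr p) \<partial>M) \<le> ennreal C" if "0 \<le> s" "s \<le> t" for s
  proof -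
    interpret sigma_finite_subalgebra M "F s" using sub[OF that(1)] .
    have J: "AE x in M. real_cond_exp M (F s) (S t) x powr p \<le> real_cond_exp M (F s) (\<lambda>x. S t x powr p) x"
      apply (rule real_cond_exp_jensens_inequality(2)[where I="{0<..}" and a=0])
      using intS[of t] assms(3,4) Spos intP powr_convex[of p] by auto
    have "AE x in M. S s x powr p \<le> real_cond_exp M (F s) (\<lambda>x. S t x powr p) x"
      using J ce[OF that] by auto
    then have "(\<integral>\<^sup>+ \<omega>. ennreal (S s \<omega> powr p) \<partial>M) \<le> (\<integral>\<^sup>+ \<omega>. ennreal (real_cond_exp M (F s) (\<lambda>x. S t x powr p) \<omega>) \<partial>M)"
      by (intro nn_integral_mono_AE) (auto simp: ennreal_leI)
    also have "\<dots> = ennreal (\<integral>\<omega>. real_cond_exp M (F s) (\<lambda>x. S t x powr p) \<omega> \<partial>M)"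
      apply (rule nn_integral_eq_integral)
      using real_cond_exp_int(1)[OF intP] apply simp
      by (rule real_cond_exp_pos) (use measP in auto)
    also have "\<dots> = ennreal C"
      unfolding C_def using real_cond_exp_int(2)[OF intP] by simp
    finally show ?thesis .
  qed
  define K where "K = exp (\<bar>p * r\<bar> * t) * ennreal C"
  have ev: "eventually (\<lambda>\<epsilon>. \<epsilon>\<^sup>2 \<le> t) (at_right (0::real))"
    using eventually_at_right_real[of 0 "sqrt t"] assms(4)
  proof (auto elim!: eventually_mono)
    fix y :: real assume "0 < y" "y < sqrt t"
    then have "y\<^sup>2 < (sqrt t)\<^sup>2" by (intro power_strict_mono) auto
    then show "y\<^sup>2 \<le> t" using assms(4) by simp
  qed
  have "eventually (\<lambda>\<epsilon>. (\<integral>\<^sup>+ \<omega>. ennreal (exp (p * X (\<epsilon>\<^sup>2) \<omega>)) \<partial>M) \<le> K) (at_right (0::real))"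
    using ev
  proof eventually_elim
    case (elim \<epsilon>)
    define s where "s = \<epsilon>\<^sup>2"
    have s: "0 \<le> s" "s \<le> t" using elim by (auto simp: s_def)
    have eq: "exp (p * X s \<omega>) = exp (p * r * s) * S s \<omega> powr p" for \<omega>
      unfolding S_def using Spos
      by (simp add: powr_def exp_add[symmetric] ln_mult algebra_simps)
    have le1: "exp (p * r * s) \<le> exp (\<bar>p * r\<bar> * t)"
    proof -
      have "p * r * s \<le> \<bar>p * r\<bar> * s" using s by (simp add: mult_right_mono)
      also have "\<dots> \<le> \<bar>p * r\<bar> * t" using s by (simp add: mult_left_mono)
      finally show ?thesis by simp
    qed
    have "(\<integral>\<^sup>+ \<omega>. ennreal (exp (p * X s \<omega>)) \<partial>M) = (\<integral>\<^sup>+ \<omega>. ennreal (exp (p * r * s)) * ennreal (S s \<omega> powr p) \<partial>M)"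
      by (simp add: eq ennreal_mult)
    also have "\<dots> = ennreal (exp (p * r * s)) * (\<integral>\<^sup>+ \<omega>. ennreal (S s \<omega> powr p) \<partial>M)"
      by (rule nn_integral_cmult) (use measS[OF s(1)] in measurable)
    also have "\<dots> \<le> ennreal (exp (\<bar>p * r\<bar> * t)) * ennreal C"
      by (intro mult_mono bnd s ennreal_leI le1) auto
    finally show ?case unfolding K_def s_def .
  qed
  then have "Limsup (at_right (0::real)) (\<lambda>\<epsilon>. \<integral>\<^sup>+ \<omega>. ennreal (exp (p * X (\<epsilon>\<^sup>2) \<omega>)) \<partial>M) \<le> K"
    by (rule Limsup_bounded)
  also have "K < \<infinity>" unfolding K_def by (simp add: ennreal_mult_less_top)
  finally show ?thesis .
qed

end
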